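(* Consider a physically realizable annihilation operator plant \[ da = F a\,dt + G_w\, d\mathcal{W} + G_u\, d\mathcal{U},\qquad d\mathcal{Y} = H a\,dt + K\, d\mathcal{W}, \] with purely canonical quantum noise inputs ($d\mathcal{W}\,d\mathcal{W}^\dagger = I\,dt$). Then the corresponding Kalman filter dynamics are independent of the output $\mathcal{Y}$ (the Kalman gain is zero).
   Context: $a$ is a vector of annihilation operators with commutation relations $[a,a^\dagger]=\Theta$, $\Theta>0$; $\mathcal{W}$, $\mathcal{U}$, $\mathcal{Y}$ are vectors of bosonic field operators. A system $da = F a\,dt + G\,d\mathcal{A}$, $d\mathcal{A}^{out} = H a\,dt + K\,d\mathcal{A}$ is physically realizable iff there is a complex matrix $\Theta>0$ with $F\Theta+\Theta F^\dagger + GG^\dagger = 0$, $G=-\Theta H^\dagger$, $K=I$. The plant is physically realizable if it can be augmented by an additional (unused) output $d\mathcal{\tilde Y} = \tilde H a\,dt + \tilde K d\mathcal{W} + \bar K d\mathcal{U}$ so that the system with input $(\mathcal{W},\mathcal{U})$ and output $(\mathcal{Y},\mathcal{\tilde Y})$ is physically realizable. Here the ``Kalman filter'' means the set of stochastic differential equations obtained by applying the standard (classical) Kalman filter formulas to the matrices of the plant model, treating the noises as unit-intensity white noises (it is not the quantum filter). *)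

theory Defs
  imports "Jordan_Normal_Form.Jordan_Normal_Form"
begin

definition ctrans :: "complex mat \<Rightarrow> complex mat" where
  "ctrans A = mat (dim_col A) (dim_row A) (\<lambda>(i,j). cnj (A $$ (j,i)))"

definition hcat :: "complex mat \<Rightarrow> complex mat \<Rightarrow> complex mat" where
  "hcat A B = four_block_mat A B (0\<^sub>m 0 (dim_col A)) (0\<^sub>m 0 (dim_col B))"

definition pos_def_herm :: "nat \<Rightarrow> complex mat \<Rightarrow> bool" where
  "pos_def_herm n T \<longleftrightarrow> T \<in> carrier_mat n n \<and> ctrans T = T \<and>
     (\<forall>v \<in> carrier_vec n. v \<noteq> 0\<^sub>v n \<longrightarrow> 0 < Re (conjugate v \<bullet> (T *\<^sub>v v)))"

(* physical realizability of  da = F a dt + G dA,  dA_out = H a dt + K dA *)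
definition phys_realizable :: "complex mat \<Rightarrow> complex mat \<Rightarrow> complex mat \<Rightarrow> complex mat \<Rightarrow> bool" where
  "phys_realizable F G H K \<longleftrightarrow>
     (\<exists>T. pos_def_herm (dim_row F) T \<and>
          F * T + T * ctrans F + G * ctrans G = 0\<^sub>m (dim_row F) (dim_row F) \<and>
          G = - (T * ctrans H) \<and>
          K = 1\<^sub>m (dim_row K))"

(* plant  da = F a dt + Gw dW + Gu dU,  dY = H a dt + K dW  (a : n, W : nw, U : nu, Y : ny)
   is physically realizable if it can be augmented by an output
   dY~ = Ht a dt + Kt dW + Kb dU  such that the system with input (W,U) and output (Y,Y~)
   is physically realizable. *)
definition plant_phys_realizable ::
  "nat \<Rightarrow> nat \<Rightarrow> nat \<Rightarrow> nat \<Rightarrow> complex mat \<Rightarrow> complex mat \<Rightarrow> complex mat \<Rightarrow> complex mat \<Rightarrow> complex mat \<Rightarrow> bool" where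
  "plant_phys_realizable n nw nu ny F Gw Gu H K \<longleftrightarrow>
     (\<exists>m Ht Kt Kb. Ht \<in> carrier_mat m n \<and> Kt \<in> carrier_mat m nw \<and> Kb \<in> carrier_mat m nu \<and>
        phys_realizable F (hcat Gw Gu) (H @\<^sub>r Ht) (four_block_mat K (0\<^sub>m ny nu) Kt Kb))"

(* Classical Kalman filter formulas applied to the plant matrices, with W, U treated as
   unit-intensity white noises: process noise Gw dW + Gu dU, measurement noise K dW. *)
definition kf_R :: "complex mat \<Rightarrow> complex mat" where
  "kf_R K = K * ctrans K"

definition kalman_gain :: "complex mat \<Rightarrow> complex mat \<Rightarrow> complex mat \<Rightarrow> complex mat \<Rightarrow> complex mat" where
  "kalman_gain Gw H K P = (P * ctrans H + Gw * ctrans K) * the (mat_inverse (kf_R K))"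

definition kf_riccati :: "complex mat \<Rightarrow> complex mat \<Rightarrow> complex mat \<Rightarrow> complex mat \<Rightarrow> complex mat \<Rightarrow> complex mat \<Rightarrow> bool" where
  "kf_riccati F Gw Gu H K P \<longleftrightarrow>
     (let L = kalman_gain Gw H K P in
      F * P + P * ctrans F + Gw * ctrans Gw + Gu * ctrans Gu - L * kf_R K * ctrans L
        = 0\<^sub>m (dim_row F) (dim_row F))"

definition hurwitz :: "complex mat \<Rightarrow> bool" where
  "hurwitz A \<longleftrightarrow> (\<forall>e. eigenvalue A e \<longrightarrow> Re e < 0)"

end

theory Submission
  imports Defs "Jordan_Normal_Form.Schur_Decomposition"
begin

lemma eig_upper_diag:
  fixes Uu :: "complex mat"
  assumes Uu: "Uu \<in> carrier_mat n n" and ut: "upper_triangular Uu" and j: "j < n"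
  shows "eigenvalue Uu (Uu $$ (j,j))"
proof -
  have "Uu $$ (j,j) \<in> set (diag_mat Uu)" using Uu j unfolding diag_mat_def by auto
  then show ?thesis
    unfolding eigenvalue_root_char_poly[OF Uu] char_poly_upper_triangular[OF Uu ut]
    by (auto simp: poly_prod_list prod_list_zero_iff)
qed

lemma sylvester_zero:
  fixes A B X :: "complex mat"
  assumes A: "A \<in> carrier_mat n n" and B: "B \<in> carrier_mat n n" and X: "X \<in> carrier_mat n n"
    and noc: "\<And>e. eigenvalue A e \<Longrightarrow> eigenvalue B e \<Longrightarrow> False"
    and eq: "A * X = X * B"
  shows "X = 0\<^sub>m n n"
proof -
  obtain es where cp: "char_poly B = (\<Prod>a\<leftarrow>es. [:-a,1:])" using char_poly_factorized[OF B] by auto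
  define Uu where "Uu = schur_upper_triangular B es"
  have Uu: "Uu \<in> carrier_mat n n" and ut: "upper_triangular Uu" and sim: "similar_mat B Uu"
    using schur_upper_triangular[OF B cp] unfolding Uu_def by auto
  obtain P Q where wit: "similar_mat_wit B Uu P Q" using sim unfolding similar_mat_def by auto
  note w = similar_mat_witD2[OF B wit]
  have eigB: "eigenvalue B (Uu $$ (j,j))" if "j < n" for j
    using eig_upper_diag[OF Uu ut that] unfolding eigenvalue_root_char_poly[OF B] eigenvalue_root_char_poly[OF Uu]
      char_poly_similar[OF sim] .
  define Yy where "Yy = X * P"
  have Yy: "Yy \<in> carrier_mat n n" using X w unfolding Yy_def by auto
  have AY: "A * Yy = Yy * Uu"
  proof -
    have "A * Yy = (A * X) * P" unfolding Yy_def using A X w by auto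
    also have "\<dots> = X * (P * Uu * Q) * P" using eq w by simp
    also have "\<dots> = X * P * Uu * (Q * P)" using X w Uu by (simp add: assoc_mult_mat[of _ n n _ n _ n])
    also have "\<dots> = Yy * Uu" using w X Uu unfolding Yy_def by simp
    finally show ?thesis .
  qed
  have col0: "\<forall>i<n. Yy $$ (i,j) = 0" if "j < n" for j
    using that
  proof (induction j rule: less_induct)
    case (less j)
    define v where "v = col Yy j"
    have v: "v \<in> carrier_vec n" using Yy unfolding v_def by auto
    have "A *\<^sub>v v = Uu $$ (j,j) \<cdot>\<^sub>v v"
    proof (rule eq_vecI)
      fix i assume i: "i < dim_vec (Uu $$ (j,j) \<cdot>\<^sub>v v)"
      hence i: "i < n" using v by auto
      have "(A *\<^sub>v v) $ i = (A * Yy) $$ (i,j)" using A Yy i less.prems unfolding v_def by auto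
      also have "\<dots> = (Yy * Uu) $$ (i,j)" using AY by simp
      also have "\<dots> = (\<Sum>k\<in>{0..<n}. Yy $$ (i,k) * Uu $$ (k,j))"
        using Yy Uu i less.prems by (auto simp: scalar_prod_def)
      also have "\<dots> = Yy $$ (i,j) * Uu $$ (j,j)"
      proof -
        have "(\<Sum>k\<in>{0..<n}. Yy $$ (i,k) * Uu $$ (k,j)) = Yy $$ (i,j) * Uu $$ (j,j) + (\<Sum>k\<in>{0..<n}-{j}. Yy $$ (i,k) * Uu $$ (k,j))"
          using less.prems by (subst sum.remove[of _ j]) auto
        also have "(\<Sum>k\<in>{0..<n}-{j}. Yy $$ (i,k) * Uu $$ (k,j)) = 0"
        proof (rule sum.neutral, rule ballI)
          fix k assume "k \<in> {0..<n}-{j}"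
          thus "Yy $$ (i, k) * Uu $$ (k, j) = 0"
            using less.IH[of k] i ut Uu by (cases "k < j") (auto simp: upper_triangular_def)
        qed
        finally show ?thesis by simp
      qed
      finally show "(A *\<^sub>v v) $ i = (Uu $$ (j,j) \<cdot>\<^sub>v v) $ i" using Yy i less.prems
        unfolding v_def by (auto simp: mult.commute)
    qed (use A v in auto)
    hence "v = 0\<^sub>v n"
      using noc[OF _ eigB[OF less.prems]] v A unfolding eigenvalue_def eigenvector_def by auto
    show ?case
    proof (intro allI impI)
      fix i assume i: "i < n"
      have "v $ i = 0" using \<open>v = 0\<^sub>v n\<close> i by simp
      thus "Yy $$ (i,j) = 0" using Yy less.prems i unfolding v_def by simp
    qed
  qed
  have "Yy = 0\<^sub>m n n" using Yy col0 by (intro eq_matI) auto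
  hence "X * P * Q = 0\<^sub>m n n" unfolding Yy_def using X w by simp
  also have "X * P * Q = X * (P * Q)" using X w by (rule_tac assoc_mult_mat) auto
  finally show ?thesis using w X by simp
qed

lemma ctrans_dims[simp]: "dim_row (ctrans A) = dim_col A" "dim_col (ctrans A) = dim_row A"
  unfolding ctrans_def by auto

lemma ctrans_carrier[simp,intro]: "A \<in> carrier_mat m n \<Longrightarrow> ctrans A \<in> carrier_mat n m"
  unfolding carrier_mat_def by auto

lemma index_ctrans[simp]: "i < dim_col A \<Longrightarrow> j < dim_row A \<Longrightarrow> ctrans A $$ (i,j) = cnj (A $$ (j,i))"
  unfolding ctrans_def by auto

lemma ctrans_ctrans[simp]: "ctrans (ctrans A) = A"
  by (rule eq_matI) auto

lemma ctrans_mult: assumes "A \<in> carrier_mat m k" "B \<in> carrier_mat k n"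
  shows "ctrans (A * B) = ctrans B * ctrans A"
  using assms by (intro eq_matI) (auto simp: scalar_prod_def mult.commute)

lemma ctrans_add: assumes "A \<in> carrier_mat m n" "B \<in> carrier_mat m n"
  shows "ctrans (A + B) = ctrans A + ctrans B"
  using assms by (intro eq_matI) auto

lemma ctrans_minus: assumes "A \<in> carrier_mat m n" "B \<in> carrier_mat m n"
  shows "ctrans (A - B) = ctrans A - ctrans B"
  using assms by (intro eq_matI) auto

lemma ctrans_uminus: "ctrans (- A) = - ctrans A"
  by (intro eq_matI) auto

lemma ctrans_zero[simp]: "ctrans (0\<^sub>m m n) = 0\<^sub>m n m"
  by (intro eq_matI) auto

lemma ctrans_one[simp]: "ctrans (1\<^sub>m n) = 1\<^sub>m n"
  by (intro eq_matI) auto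

lemma ctrans_smult: "ctrans (c \<cdot>\<^sub>m A) = cnj c \<cdot>\<^sub>m ctrans A"
  by (intro eq_matI) auto

lemma re_gram_nonneg: "Re ((ctrans M * M) $$ (i,i)) \<ge> 0" if "i < dim_col M"
proof -
  have "(ctrans M * M) $$ (i,i) = (\<Sum>k\<in>{0..<dim_row M}. cnj (M $$ (k,i)) * M $$ (k,i))"
    using that by (auto simp: scalar_prod_def)
  also have "Re \<dots> = (\<Sum>k\<in>{0..<dim_row M}. (Re (M $$ (k,i)))^2 + (Im (M $$ (k,i)))^2)"
    by (simp add: Re_sum power2_eq_square) 
  finally show ?thesis by (simp add: sum_nonneg)
qed

lemma adj_sprod:
  fixes A :: "complex mat"
  assumes A: "A \<in> carrier_mat n m" and v: "v \<in> carrier_vec n" and u: "u \<in> carrier_vec m"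
  shows "conjugate v \<bullet> (A *\<^sub>v u) = conjugate (ctrans A *\<^sub>v v) \<bullet> u"
proof -
  have "conjugate v \<bullet> (A *\<^sub>v u) = (\<Sum>i\<in>{0..<n}. cnj (v $ i) * (\<Sum>j\<in>{0..<m}. A $$ (i,j) * u $ j))"
    using A v u by (auto simp: scalar_prod_def)
  also have "\<dots> = (\<Sum>i\<in>{0..<n}. \<Sum>j\<in>{0..<m}. cnj (v $ i) * A $$ (i,j) * u $ j)"
    by (simp add: sum_distrib_left mult.assoc)
  also have "\<dots> = (\<Sum>j\<in>{0..<m}. \<Sum>i\<in>{0..<n}. cnj (v $ i) * A $$ (i,j) * u $ j)"
    by (rule sum.swap)
  also have "\<dots> = conjugate (ctrans A *\<^sub>v v) \<bullet> u"
    using A v u by (auto simp: scalar_prod_def sum_distrib_right sum_distrib_left mult.commute mult.left_commute intro!: sum.cong)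
  finally show ?thesis .
qed

lemma re_cnjsq_nonneg: "Re (conjugate w \<bullet> w) \<ge> 0" for w :: "complex vec"
proof -
  have "conjugate w \<bullet> w = (\<Sum>k\<in>{0..<dim_vec w}. cnj (w $ k) * w $ k)" by (simp add: scalar_prod_def)
  hence "Re (conjugate w \<bullet> w) = (\<Sum>k\<in>{0..<dim_vec w}. (Re (w $ k))^2 + (Im (w $ k))^2)"
    by (simp add: Re_sum power2_eq_square)
  thus ?thesis by (simp add: sum_nonneg)
qed

lemma eig_neg_ctrans:
  fixes F T G :: "complex mat"
  assumes F: "F \<in> carrier_mat n n" and G: "G \<in> carrier_mat n k" and T: "pos_def_herm n T"
    and E: "F * T + T * ctrans F + G * ctrans G = 0\<^sub>m n n"
    and ev: "eigenvalue (- ctrans F) e"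
  shows "Re e \<ge> 0"
proof -
  have Tc: "T \<in> carrier_mat n n" using T unfolding pos_def_herm_def by auto
  obtain v where v: "v \<in> carrier_vec n" "v \<noteq> 0\<^sub>v n" and ve: "(- ctrans F) *\<^sub>v v = e \<cdot>\<^sub>v v"
    using ev F unfolding eigenvalue_def eigenvector_def by auto
  have Fv: "ctrans F *\<^sub>v v = (- e) \<cdot>\<^sub>v v"
  proof -
    have "ctrans F *\<^sub>v v = - ((- ctrans F) *\<^sub>v v)" using F v by auto
    thus ?thesis using ve by auto
  qed
  define s where "s = conjugate v \<bullet> (T *\<^sub>v v)"
  have s: "0 < Re s" using T v unfolding pos_def_herm_def s_def by auto
  define q where "q = (\<lambda>M. conjugate v \<bullet> (M *\<^sub>v v))"
  have "q (F * T + T * ctrans F + G * ctrans G) = q (F * T) + q (T * ctrans F) + q (G * ctrans G)"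
  proof -
    have c1: "F * T \<in> carrier_mat n n" "T * ctrans F \<in> carrier_mat n n" "G * ctrans G \<in> carrier_mat n n"
      using F Tc G by auto
    have "(F * T + T * ctrans F + G * ctrans G) *\<^sub>v v = (F * T) *\<^sub>v v + (T * ctrans F) *\<^sub>v v + (G * ctrans G) *\<^sub>v v"
      using add_mult_distrib_mat_vec[of "F*T + T*ctrans F" n n "G*ctrans G" v]
        add_mult_distrib_mat_vec[of "F*T" n n "T*ctrans F" v] c1 v by simp
    hence "q (F * T + T * ctrans F + G * ctrans G) = conjugate v \<bullet> ((F * T) *\<^sub>v v + (T * ctrans F) *\<^sub>v v + (G * ctrans G) *\<^sub>v v)"
      unfolding q_def by simp
    also have "\<dots> = q (F * T) + q (T * ctrans F) + q (G * ctrans G)"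
      unfolding q_def using c1 v
      by (subst scalar_prod_add_distrib[of _ n], auto intro: mult_mat_vec_carrier)+
    finally show ?thesis .
  qed
  moreover have "q (0\<^sub>m n n) = 0"
  proof -
    have "0\<^sub>m n n *\<^sub>v v = 0\<^sub>v n" using v by (intro eq_vecI) (auto simp: scalar_prod_def)
    thus ?thesis unfolding q_def using v by simp
  qed
  moreover have "q (F * T) = - cnj e * s"
  proof -
    have "q (F * T) = conjugate v \<bullet> (F *\<^sub>v (T *\<^sub>v v))" unfolding q_def using F Tc v ctrans_carrier[OF F] by simp
    also have "\<dots> = conjugate (ctrans F *\<^sub>v v) \<bullet> (T *\<^sub>v v)" using adj_sprod[OF F v(1)] Tc v by simp
    also have "\<dots> = - cnj e * s" unfolding Fv s_def using v Tc by (simp add: conjugate_smult_vec)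
    finally show ?thesis .
  qed
  moreover have "q (T * ctrans F) = - e * s"
  proof -
    have "q (T * ctrans F) = conjugate v \<bullet> (T *\<^sub>v (ctrans F *\<^sub>v v))" unfolding q_def
      using assoc_mult_mat_vec[OF Tc ctrans_carrier[OF F] v(1)] by simp
    also have "\<dots> = - e * s" unfolding Fv s_def using v Tc by (simp add: mult_mat_vec)
    finally show ?thesis .
  qed
  moreover have "Re (q (G * ctrans G)) \<ge> 0"
  proof -
    have "q (G * ctrans G) = conjugate v \<bullet> (G *\<^sub>v (ctrans G *\<^sub>v v))" unfolding q_def
      using assoc_mult_mat_vec[OF G ctrans_carrier[OF G] v(1)] by simp
    also have "\<dots> = conjugate (ctrans G *\<^sub>v v) \<bullet> (ctrans G *\<^sub>v v)"
      using adj_sprod[OF G v(1) mult_mat_vec_carrier[OF ctrans_carrier[OF G] v(1)]] by simp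
    finally show ?thesis using re_cnjsq_nonneg by simp
  qed
  ultimately have "Re (- cnj e * s - e * s) + Re (q (G * ctrans G)) = 0"
    using E by (metis (no_types, lifting) add_uminus_conv_diff mult_minus_left plus_complex.sel(1) zero_complex.sel(1))
  hence "2 * Re e * Re s \<ge> 0" using \<open>Re (q (G * ctrans G)) \<ge> 0\<close>
    by (simp add: algebra_simps)
  with s show ?thesis by (simp add: zero_le_mult_iff)
qed

lemma mat_inverse_one: "the (mat_inverse (1\<^sub>m n :: complex mat)) = 1\<^sub>m n"
proof -
  have u: "1\<^sub>m n \<in> Units (ring_mat TYPE(complex) n (undefined::unit))"
    using monoid.Units_one_closed[OF ring.is_monoid[OF ring_mat[of n "undefined::unit"]]]
    by (simp add: ring_mat_simps)
  have "mat_inverse (1\<^sub>m n :: complex mat) \<noteq> None"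
    using mat_inverse(1)[of "1\<^sub>m n :: complex mat" n, OF _ _, of "undefined::unit"] u by auto
  then obtain B where B: "mat_inverse (1\<^sub>m n :: complex mat) = Some B" by auto
  from mat_inverse(2)[OF one_carrier_mat B] have "1\<^sub>m n * B = 1\<^sub>m n" "B \<in> carrier_mat n n" by auto
  hence "B = 1\<^sub>m n" by simp
  thus ?thesis using B by simp
qed

lemma plant_facts:
  fixes F Gw Gu H K :: "complex mat"
  assumes F: "F \<in> carrier_mat n n" and Gw: "Gw \<in> carrier_mat n nw" and Gu: "Gu \<in> carrier_mat n nu"
    and H: "H \<in> carrier_mat ny n" and K: "K \<in> carrier_mat ny nw"
    and pr: "plant_phys_realizable n nw nu ny F Gw Gu H K"
  obtains T G where "pos_def_herm n T"
    "F * T + T * ctrans F + (Gw * ctrans Gw + Gu * ctrans Gu) = 0\<^sub>m n n"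
    "Gw * ctrans K = - (T * ctrans H)" "kf_R K = 1\<^sub>m ny"
    "G \<in> carrier_mat n (nw + nu)" "G * ctrans G = Gw * ctrans Gw + Gu * ctrans Gu"
proof -
  obtain m Ht Kt Kb where Ht: "Ht \<in> carrier_mat m n" and Kt: "Kt \<in> carrier_mat m nw"
    and Kb: "Kb \<in> carrier_mat m nu"
    and phr: "phys_realizable F (hcat Gw Gu) (H @\<^sub>r Ht) (four_block_mat K (0\<^sub>m ny nu) Kt Kb)"
    using pr unfolding plant_phys_realizable_def by auto
  define G where "G = hcat Gw Gu"
  define Ha where "Ha = H @\<^sub>r Ht"
  define FB where "FB = four_block_mat K (0\<^sub>m ny nu) Kt Kb"
  obtain T where T: "pos_def_herm n T" and E1: "F * T + T * ctrans F + G * ctrans G = 0\<^sub>m n n"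
    and EG: "G = - (T * ctrans Ha)" and EK: "FB = 1\<^sub>m (dim_row FB)"
    using phr F unfolding phys_realizable_def G_def Ha_def FB_def by auto
  have Tc: "T \<in> carrier_mat n n" using T unfolding pos_def_herm_def by auto
  have dFB: "dim_row FB = ny + m" "dim_col FB = nw + nu" unfolding FB_def using K Kt Kb by auto
  have dims: "nw + nu = ny + m" using arg_cong[OF EK, of dim_col] dFB by simp
  have Kent: "K $$ (i,k) = (if i = k then 1 else 0)" if "i < ny" "k < nw" for i k
  proof -
    have "FB $$ (i,k) = K $$ (i,k)" unfolding FB_def using that K Kt Kb by simp
    moreover have "FB $$ (i,k) = (if i = k then 1 else 0)" using that dims by (subst EK) (auto simp: dFB)
    ultimately show ?thesis by simp
  qed
  have nyle: "ny \<le> nw"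
  proof (rule ccontr)
    assume "\<not> ny \<le> nw"
    hence lt: "nw < ny" by simp
    have "FB $$ (nw,nw) = 0" unfolding FB_def using lt K Kt Kb dims by (subst index_mat_four_block) auto
    moreover have "FB $$ (nw,nw) = 1" using lt dims by (subst EK) (auto simp: dFB)
    ultimately show False by simp
  qed
  have Gent: "G $$ (i,k) = Gw $$ (i,k)" if "i < n" "k < nw" for i k
    unfolding G_def hcat_def using that Gw Gu by simp
  have Gent2: "G $$ (i,nw + k) = Gu $$ (i,k)" if "i < n" "k < nu" for i k
    unfolding G_def hcat_def using that Gw Gu by simp
  have Gc: "G \<in> carrier_mat n (nw + nu)" unfolding G_def hcat_def using Gw Gu by auto
  have Hac: "Ha \<in> carrier_mat (ny + m) n" unfolding Ha_def using H Ht by auto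
  have Haent: "Ha $$ (j,l) = H $$ (j,l)" if "j < ny" "l < n" for j l
    unfolding Ha_def append_rows_def using that H Ht by simp
  have R: "kf_R K = 1\<^sub>m ny"
  proof (rule eq_matI)
    fix i j assume ij: "i < dim_row (1\<^sub>m ny)" "j < dim_col (1\<^sub>m ny)"
    hence ij: "i < ny" "j < ny" by auto
    have "kf_R K $$ (i,j) = (\<Sum>k\<in>{0..<nw}. K $$ (i,k) * cnj (K $$ (j,k)))"
      unfolding kf_R_def using K ij by (auto simp: scalar_prod_def)
    also have "\<dots> = (\<Sum>k\<in>{0..<nw}. (if i = k then 1 else 0) * (if j = k then 1 else 0))"
      using ij by (intro sum.cong) (auto simp: Kent)
    also have "\<dots> = (if i = j then 1 else 0)" using ij nyle by (auto simp: if_distrib cong: if_cong)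
    finally show "kf_R K $$ (i,j) = 1\<^sub>m ny $$ (i,j)" using ij by simp
  qed (use K in \<open>auto simp: kf_R_def\<close>)
  have GK: "Gw * ctrans K = - (T * ctrans H)"
  proof (rule eq_matI)
    fix i j assume ij: "i < dim_row (- (T * ctrans H))" "j < dim_col (- (T * ctrans H))"
    hence ij: "i < n" "j < ny" using Tc H by auto
    have "(Gw * ctrans K) $$ (i,j) = (\<Sum>k\<in>{0..<nw}. Gw $$ (i,k) * cnj (K $$ (j,k)))"
      using K Gw ij by (auto simp: scalar_prod_def)
    also have "\<dots> = (\<Sum>k\<in>{0..<nw}. Gw $$ (i,k) * (if j = k then 1 else 0))"
      using ij by (intro sum.cong) (auto simp: Kent)
    also have "\<dots> = Gw $$ (i,j)" using ij nyle by (auto simp: if_distrib cong: if_cong)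
    also have "\<dots> = G $$ (i,j)" using Gent ij nyle by simp
    also have "\<dots> = - (\<Sum>l\<in>{0..<n}. T $$ (i,l) * cnj (Ha $$ (j,l)))"
      unfolding EG using ij Tc Hac dims by (auto simp: scalar_prod_def)
    also have "\<dots> = - (\<Sum>l\<in>{0..<n}. T $$ (i,l) * cnj (H $$ (j,l)))"
      using ij by (auto simp: Haent intro!: sum.cong)
    also have "\<dots> = (- (T * ctrans H)) $$ (i,j)"
      using ij Tc H by (auto simp: scalar_prod_def)
    finally show "(Gw * ctrans K) $$ (i,j) = (- (T * ctrans H)) $$ (i,j)" .
  qed (use K Gw Tc H in auto)
  have GG: "G * ctrans G = Gw * ctrans Gw + Gu * ctrans Gu"
  proof (rule eq_matI)
    fix i j assume ij: "i < dim_row (Gw * ctrans Gw + Gu * ctrans Gu)" "j < dim_col (Gw * ctrans Gw + Gu * ctrans Gu)"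
    hence ij: "i < n" "j < n" using Gw Gu by auto
    have "(G * ctrans G) $$ (i,j) = (\<Sum>k\<in>{0..<nw+nu}. G $$ (i,k) * cnj (G $$ (j,k)))"
      using Gc ij by (auto simp: scalar_prod_def)
    also have "\<dots> = (\<Sum>k\<in>{0..<nw}. G $$ (i,k) * cnj (G $$ (j,k))) + (\<Sum>k\<in>{nw..<nw+nu}. G $$ (i,k) * cnj (G $$ (j,k)))"
      by (rule sum.atLeastLessThan_concat[symmetric]) auto
    also have "(\<Sum>k\<in>{nw..<nw+nu}. G $$ (i,k) * cnj (G $$ (j,k))) = (\<Sum>k\<in>{0..<nu}. G $$ (i,nw+k) * cnj (G $$ (j,nw+k)))"
      by (rule sum.reindex_bij_witness[of _ "\<lambda>k. nw + k" "\<lambda>k. k - nw"]) auto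
    also have "\<dots> = (\<Sum>k\<in>{0..<nu}. Gu $$ (i,k) * cnj (Gu $$ (j,k)))"
      using ij by (auto simp: Gent2 intro!: sum.cong)
    also have "(\<Sum>k\<in>{0..<nw}. G $$ (i,k) * cnj (G $$ (j,k))) = (\<Sum>k\<in>{0..<nw}. Gw $$ (i,k) * cnj (Gw $$ (j,k)))"
      using ij by (auto simp: Gent intro!: sum.cong)
    finally show "(G * ctrans G) $$ (i,j) = (Gw * ctrans Gw + Gu * ctrans Gu) $$ (i,j)"
      using ij Gw Gu by (auto simp: scalar_prod_def)
  qed (use Gc Gw Gu in auto)
  show ?thesis using that[OF T _ GK R Gc GG] E1 GG by simp
qed

lemma lin_aux: fixes ft tf q fp pf ll fx xf :: complex
  assumes "ft + tf + q = 0" "fp + pf + q - ll = 0" "fx = fp - ft" "xf = pf - tf"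
  shows "fx - ll = - xf"
proof -
  have "ll = fp + pf + q" using assms(2) by (simp add: eq_diff_eq)
  moreover have "q = - (ft + tf)" using assms(1) by (metis add_eq_0_iff)
  ultimately show ?thesis using assms(3,4) by simp
qed

theorem corollary1:
  fixes F Gw Gu H K :: "complex mat" and n nw nu ny :: nat
  assumes "F \<in> carrier_mat n n" and "Gw \<in> carrier_mat n nw" and "Gu \<in> carrier_mat n nu"
    and "H \<in> carrier_mat ny n" and "K \<in> carrier_mat ny nw"
    and "plant_phys_realizable n nw nu ny F Gw Gu H K"
  shows "(\<exists>P. pos_def_herm n P \<and> kf_riccati F Gw Gu H K P \<and>
              kalman_gain Gw H K P = 0\<^sub>m n ny)
       \<and> (\<forall>P. P \<in> carrier_mat n n \<and> ctrans P = P \<and> kf_riccati F Gw Gu H K P \<and>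
              hurwitz (F - kalman_gain Gw H K P * H)
              \<longrightarrow> kalman_gain Gw H K P = 0\<^sub>m n ny)"
proof -
  note F = assms(1) and Gw = assms(2) and Gu = assms(3) and H = assms(4) and K = assms(5)
  obtain T G where T: "pos_def_herm n T"
    and E: "F * T + T * ctrans F + (Gw * ctrans Gw + Gu * ctrans Gu) = 0\<^sub>m n n"
    and GK: "Gw * ctrans K = - (T * ctrans H)" and R: "kf_R K = 1\<^sub>m ny"
    and Gc: "G \<in> carrier_mat n (nw + nu)" and GG: "G * ctrans G = Gw * ctrans Gw + Gu * ctrans Gu"
    using plant_facts[OF assms] by blast
  have Tc: "T \<in> carrier_mat n n" and Th: "ctrans T = T" using T unfolding pos_def_herm_def by auto
  have Hs: "ctrans H \<in> carrier_mat n ny" using H by auto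
  have Fs: "ctrans F \<in> carrier_mat n n" using F by auto
  have gain: "kalman_gain Gw H K P = (P - T) * ctrans H" if P: "P \<in> carrier_mat n n" for P
  proof -
    have "kalman_gain Gw H K P = (P * ctrans H + - (T * ctrans H)) * 1\<^sub>m ny"
      unfolding kalman_gain_def R mat_inverse_one GK ..
    also have "\<dots> = P * ctrans H + - (T * ctrans H)" using H by (intro right_mult_one_mat') simp
    also have "\<dots> = P * ctrans H - T * ctrans H"
      using P Tc Hs by (subst minus_add_uminus_mat[of _ n ny]) auto
    also have "\<dots> = (P - T) * ctrans H" using P Tc Hs by (subst minus_mult_distrib_mat[of _ n n]) auto
    finally show ?thesis .
  qed
  define Q where "Q = Gw * ctrans Gw + Gu * ctrans Gu"
  have Qc: "Q \<in> carrier_mat n n" unfolding Q_def using Gw Gu by auto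
  have ric: "kf_riccati F Gw Gu H K P \<longleftrightarrow>
      F * P + P * ctrans F + Q - kalman_gain Gw H K P * ctrans (kalman_gain Gw H K P) = 0\<^sub>m n n"
    if P: "P \<in> carrier_mat n n" for P
  proof -
    have Lc: "kalman_gain Gw H K P \<in> carrier_mat n ny" unfolding gain[OF P] using mult_carrier_mat[OF minus_carrier_mat[OF Tc, of P] Hs] .
    have "F * P + P * ctrans F + Gw * ctrans Gw + Gu * ctrans Gu = F * P + P * ctrans F + Q"
      unfolding Q_def using F P Fs Gw Gu by (subst assoc_add_mat[of _ n n]) auto
    moreover have "kalman_gain Gw H K P * kf_R K = kalman_gain Gw H K P" unfolding R using Lc by simp
    ultimately show ?thesis unfolding kf_riccati_def Let_def using F by simp
  qed
  have part1: "pos_def_herm n T \<and> kf_riccati F Gw Gu H K T \<and> kalman_gain Gw H K T = 0\<^sub>m n ny"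
  proof -
    have L0: "kalman_gain Gw H K T = 0\<^sub>m n ny" unfolding gain[OF Tc] using Tc H by simp
    have "F * T + T * ctrans F + Q - 0\<^sub>m n ny * ctrans (0\<^sub>m n ny) = 0\<^sub>m n n"
      using E unfolding Q_def[symmetric] using F Tc Fs Qc by simp
    thus ?thesis using T L0 ric[OF Tc] by simp
  qed
  have part2: "kalman_gain Gw H K P = 0\<^sub>m n ny"
    if P: "P \<in> carrier_mat n n" and Ph: "ctrans P = P" and rP: "kf_riccati F Gw Gu H K P"
      and hw: "hurwitz (F - kalman_gain Gw H K P * H)" for P
  proof -
    define X where "X = P - T"
    define L where "L = X * ctrans H"
    have Xc: "X \<in> carrier_mat n n" unfolding X_def by (rule minus_carrier_mat[OF Tc])
    have Lc: "L \<in> carrier_mat n ny" unfolding L_def by (rule mult_carrier_mat[OF Xc Hs])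
    have Xh: "ctrans X = X" unfolding X_def using ctrans_minus[OF P Tc] Ph Th by simp
    have gL: "kalman_gain Gw H K P = L" unfolding L_def X_def using gain[OF P] .
    have rr: "F * P + P * ctrans F + Q - L * ctrans L = 0\<^sub>m n n" using rP ric[OF P] gL by simp
    have LL: "L * ctrans L = L * (H * X)"
      unfolding L_def using ctrans_mult[OF Xc Hs] Xh by simp
    have FX: "F * X = F * P - F * T" unfolding X_def using F P Tc by (rule mult_minus_distrib_mat)
    have XF: "X * ctrans F = P * ctrans F - T * ctrans F" unfolding X_def using F P Tc Fs
      by (subst minus_mult_distrib_mat[of _ n n]) auto
    have key: "F * X - L * ctrans L = - (X * ctrans F)"
    proof (rule eq_matI)
      fix i j assume ij: "i < dim_row (- (X * ctrans F))" "j < dim_col (- (X * ctrans F))"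
      hence ij: "i < n" "j < n" using Xc F by auto
      have a: "(F * T) $$ (i,j) + (T * ctrans F) $$ (i,j) + Q $$ (i,j) = 0"
        using arg_cong[OF E[unfolded Q_def[symmetric]], of "\<lambda>M. M $$ (i,j)"] ij F Tc Fs Qc by simp
      have b: "(F * P) $$ (i,j) + (P * ctrans F) $$ (i,j) + Q $$ (i,j) - (L * ctrans L) $$ (i,j) = 0"
        using arg_cong[OF rr, of "\<lambda>M. M $$ (i,j)"] ij F P Fs Qc Lc by simp
      have c: "(F * X) $$ (i,j) = (F * P) $$ (i,j) - (F * T) $$ (i,j)"
        unfolding FX using ij F P Tc by simp
      have d: "(X * ctrans F) $$ (i,j) = (P * ctrans F) $$ (i,j) - (T * ctrans F) $$ (i,j)"
        unfolding XF using ij F P Tc by simp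
      have e: "(F * X - L * ctrans L) $$ (i,j) = (F * X) $$ (i,j) - (L * ctrans L) $$ (i,j)"
        using ij F Xc Lc by simp
      have f: "(- (X * ctrans F)) $$ (i,j) = - (X * ctrans F) $$ (i,j)"
        using ij F Xc by simp
      show "(F * X - L * ctrans L) $$ (i,j) = (- (X * ctrans F)) $$ (i,j)"
        unfolding e f using lin_aux[OF a b c d] .
    qed (use F Xc Lc in auto)
    define A where "A = F - L * H"
    have Ac: "A \<in> carrier_mat n n" unfolding A_def by (rule minus_carrier_mat[OF mult_carrier_mat[OF Lc H]])
    have AX: "A * X = X * (- ctrans F)"
    proof -
      have "A * X = F * X - L * H * X" unfolding A_def using F Lc H Xc
        by (subst minus_mult_distrib_mat[of _ n n]) auto
      also have "L * H * X = L * (H * X)" using Lc H Xc by simp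
      also have "F * X - L * (H * X) = - (X * ctrans F)" using key LL by simp
      also have "\<dots> = X * (- ctrans F)" using Xc F by (simp add: uminus_mult_right_mat)
      finally show ?thesis .
    qed
    have "X = 0\<^sub>m n n"
    proof (rule sylvester_zero[OF Ac _ Xc _ AX])
      show "- ctrans F \<in> carrier_mat n n" using Fs by simp
      fix e assume e1: "eigenvalue A e" and e2: "eigenvalue (- ctrans F) e"
      have "Re e < 0" using hw e1 unfolding hurwitz_def A_def gL by blast
      moreover have "Re e \<ge> 0"
        using eig_neg_ctrans[OF F Gc T _ e2] E GG by simp
      ultimately show False by simp
    qed
    thus ?thesis using gL H unfolding L_def by simp
  qed
  show ?thesis using part1 part2 by blast
qed

end
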